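(* Let $V$ be a $\mathcal{T}$-module such that the restriction of $V$ to $\mathcal{U}(\mathfrak{h})$, where $\mathfrak{h}=\mathbb{C}L_0\oplus\mathbb{C}G_0$, is free of rank $1$. Then there exist $\lambda\in\mathbb{C}^*$ and $\alpha\in\mathbb{C}$ such that $V$ or $\Pi(V)$ is isomorphic to $\mathcal{M}_1(\lambda,\alpha)$ or to $\mathcal{M}_{-1}(\lambda,\alpha)$.
   Context: The twisted $N=2$ superconformal algebra $\mathcal{T}$ is the Lie superalgebra over $\mathbb{C}$ with basis $\{L_m, I_r, G_p\mid m\in\mathbb{Z}, r\in\frac12+\mathbb{Z}, p\in\frac12\mathbb{Z}\}$, even part spanned by the $L_m,I_r$, odd part by the $G_p$, only nonzero brackets $[L_m,L_n]=(m-n)L_{m+n}$, $[L_m,I_r]=-rI_{m+r}$, $[L_m,G_p]=(\frac m2-p)G_{m+p}$, $[I_r,G_p]=G_{r+p}$, $[G_p,G_q]=(-1)^{2p}2L_{p+q}$ if $p+q\in\mathbb{Z}$, $[G_p,G_q]=(-1)^{2p+1}(p-q)I_{p+q}$ if $p+q\in\frac12+\mathbb{Z}$. Modules are $\mathbb{Z}_2$-graded; $\Pi$ is the parity-change functor. For $p\in\frac12\mathbb{Z}$, $\lambda^p$ means $(\lambda^{1/2})^{2p}$ for a fixed square root. For $\lambda\in\mathbb{C}^*,\alpha\in\mathbb{C},t=\pm1$, $\mathcal{M}_t(\lambda,\alpha)$ is the space $\mathbb{C}[\partial^2]\oplus\partial\mathbb{C}[\partial^2]$ ($\partial$ a formal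 variable; even part $\mathbb{C}[\partial^2]$, odd part $\partial\mathbb{C}[\partial^2]$) with action ($m\in\mathbb{Z}$, $r\in\frac12+\mathbb{Z}$, $p\in\frac12\mathbb{Z}$): $L_mf(\partial^2)=\lambda^m(\partial^2+m\alpha)f(\partial^2+m)$, $L_m\partial f(\partial^2)=\lambda^m(\partial^2+m(\alpha+\frac12))\partial f(\partial^2+m)$, $I_rf(\partial^2)=-2t^{2r}\lambda^{r}\alpha f(\partial^2+r)$, $I_r\partial f(\partial^2)=t^{2r}\lambda^{r}(1-2\alpha)\partial f(\partial^2+r)$, $G_pf(\partial^2)=t^{2p}\lambda^p\partial f(\partial^2+p)$, $G_p\partial f(\partial^2)=(-t)^{2p}\lambda^p(\partial^2+2p\alpha)f(\partial^2+p)$. *)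

theory Defs
  imports Complex_Main "HOL-Computational_Algebra.Polynomial" "HOL-Library.Product_Plus"
begin

(* For the half-integer indexed generators we use doubled indices:
   I a (a :: int, a odd) stands for I_{a/2};  G b (b :: int) stands for G_{b/2}. *)

definition is_T_module ::
  "(complex \<Rightarrow> 'v::ab_group_add \<Rightarrow> 'v) \<Rightarrow> 'v set \<Rightarrow> 'v set \<Rightarrow>
   (int \<Rightarrow> 'v \<Rightarrow> 'v) \<Rightarrow> (int \<Rightarrow> 'v \<Rightarrow> 'v) \<Rightarrow> (int \<Rightarrow> 'v \<Rightarrow> 'v) \<Rightarrow> bool" where
  "is_T_module scale V0 V1 L I G \<longleftrightarrow>
     vector_space scale \<and>
     module.subspace scale V0 \<and> module.subspace scale V1 \<and>
     V0 \<inter> V1 = {0} \<and> (\<forall>v. \<exists>v0\<in>V0. \<exists>v1\<in>V1. v = v0 + v1) \<and>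
     (\<forall>m. Vector_Spaces.linear scale scale (L m)) \<and>
     (\<forall>a. odd a \<longrightarrow> Vector_Spaces.linear scale scale (I a)) \<and>
     (\<forall>b. Vector_Spaces.linear scale scale (G b)) \<and>
     (\<forall>m. L m ` V0 \<subseteq> V0 \<and> L m ` V1 \<subseteq> V1) \<and>
     (\<forall>a. odd a \<longrightarrow> I a ` V0 \<subseteq> V0 \<and> I a ` V1 \<subseteq> V1) \<and>
     (\<forall>b. G b ` V0 \<subseteq> V1 \<and> G b ` V1 \<subseteq> V0) \<and>
     (\<forall>m n v. L m (L n v) - L n (L m v) = scale (of_int (m - n)) (L (m + n) v)) \<and>
     (\<forall>m a v. odd a \<longrightarrow>
        L m (I a v) - I a (L m v) = scale (- (of_int a / 2)) (I (2 * m + a) v)) \<and>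
     (\<forall>m b v. L m (G b v) - G b (L m v) = scale (of_int m / 2 - of_int b / 2) (G (2 * m + b) v)) \<and>
     (\<forall>a c v. odd a \<longrightarrow> odd c \<longrightarrow> I a (I c v) - I c (I a v) = 0) \<and>
     (\<forall>a b v. odd a \<longrightarrow> I a (G b v) - G b (I a v) = G (a + b) v) \<and>
     (\<forall>a b v. G a (G b v) + G b (G a v) =
        (if even (a + b)
         then scale ((-1) ^ nat \<bar>a\<bar> * 2) (L ((a + b) div 2) v)
         else scale ((-1) ^ nat \<bar>a + 1\<bar> * (of_int a / 2 - of_int b / 2)) (I (a + b) v)))"

definition op_poly :: "(complex \<Rightarrow> 'v::ab_group_add \<Rightarrow> 'v) \<Rightarrow> complex poly \<Rightarrow> ('v \<Rightarrow> 'v) \<Rightarrow> 'v \<Rightarrow> 'v" where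
  "op_poly scale p T v = (\<Sum>i\<le>degree p. scale (coeff p i) ((T ^^ i) v))"

(* U(h), h = C L_0 + C G_0, has PBW basis L_0^i G_0^e (i \<ge> 0, e \<in> {0,1}).
   V is free of rank 1 over U(h): some v such that u \<mapsto> u.v is a bijection U(h) \<rightarrow> V;
   elements of U(h) are written a(L_0) + b(L_0) G_0 with polynomials a, b. *)
definition Uh_free_rank1 ::
  "(complex \<Rightarrow> 'v::ab_group_add \<Rightarrow> 'v) \<Rightarrow> (int \<Rightarrow> 'v \<Rightarrow> 'v) \<Rightarrow> (int \<Rightarrow> 'v \<Rightarrow> 'v) \<Rightarrow> bool" where
  "Uh_free_rank1 scale L G \<longleftrightarrow>
     (\<exists>v. bij (\<lambda>(a, b). op_poly scale a (L 0) v + op_poly scale b (L 0) (G 0 v)))"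

(* The module M_t(lambda, alpha): element (f, g) represents f(\<partial>^2) + \<partial> g(\<partial>^2).
   lambda^p := (csqrt lambda)^(2p) for p in (1/2)Z. *)
type_synonym Mspace = "complex poly \<times> complex poly"

definition M_scale :: "complex \<Rightarrow> Mspace \<Rightarrow> Mspace" where
  "M_scale c x = (smult c (fst x), smult c (snd x))"

definition M_even :: "Mspace set" where "M_even = {(f, 0) | f. True}"
definition M_odd :: "Mspace set" where "M_odd = {(0, g) | g. True}"

definition shift :: "complex \<Rightarrow> complex poly \<Rightarrow> complex poly" where
  "shift c f = pcompose f [:c, 1:]"

definition M_L :: "complex \<Rightarrow> complex \<Rightarrow> int \<Rightarrow> Mspace \<Rightarrow> Mspace" where
  "M_L lam \<alpha> m x =
     (smult (csqrt lam powi (2 * m)) ([:of_int m * \<alpha>, 1:] * shift (of_int m) (fst x)),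
      smult (csqrt lam powi (2 * m)) ([:of_int m * (\<alpha> + 1/2), 1:] * shift (of_int m) (snd x)))"

definition M_I :: "complex \<Rightarrow> complex \<Rightarrow> complex \<Rightarrow> int \<Rightarrow> Mspace \<Rightarrow> Mspace" where
  "M_I t lam \<alpha> a x =
     (smult (- 2 * t powi a * csqrt lam powi a * \<alpha>) (shift (of_int a / 2) (fst x)),
      smult (t powi a * csqrt lam powi a * (1 - 2 * \<alpha>)) (shift (of_int a / 2) (snd x)))"

definition M_G :: "complex \<Rightarrow> complex \<Rightarrow> complex \<Rightarrow> int \<Rightarrow> Mspace \<Rightarrow> Mspace" where
  "M_G t lam \<alpha> b x =
     (smult ((- t) powi b * csqrt lam powi b) ([:of_int b * \<alpha>, 1:] * shift (of_int b / 2) (snd x)),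
      smult (t powi b * csqrt lam powi b) (shift (of_int b / 2) (fst x)))"

definition iso_to_M ::
  "(complex \<Rightarrow> 'v::ab_group_add \<Rightarrow> 'v) \<Rightarrow> 'v set \<Rightarrow> 'v set \<Rightarrow>
   (int \<Rightarrow> 'v \<Rightarrow> 'v) \<Rightarrow> (int \<Rightarrow> 'v \<Rightarrow> 'v) \<Rightarrow> (int \<Rightarrow> 'v \<Rightarrow> 'v) \<Rightarrow>
   complex \<Rightarrow> complex \<Rightarrow> complex \<Rightarrow> bool" where
  "iso_to_M scale V0 V1 L I G t lam \<alpha> \<longleftrightarrow>
     (\<exists>\<phi> :: 'v \<Rightarrow> Mspace.
        Vector_Spaces.linear scale M_scale \<phi> \<and> bij \<phi> \<and>
        \<phi> ` V0 = M_even \<and> \<phi> ` V1 = M_odd \<and>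
        (\<forall>m v. \<phi> (L m v) = M_L lam \<alpha> m (\<phi> v)) \<and>
        (\<forall>a v. odd a \<longrightarrow> \<phi> (I a v) = M_I t lam \<alpha> a (\<phi> v)) \<and>
        (\<forall>b v. \<phi> (G b v) = M_G t lam \<alpha> b (\<phi> v)))"

end

theory Submission
  imports Defs
begin


locale cvs = vector_space scale for scale :: "complex \<Rightarrow> 'v::ab_group_add \<Rightarrow> 'v"
begin

lemma lin_add: "Vector_Spaces.linear scale scale f \<Longrightarrow> f (x + y) = f x + f y"
  unfolding Vector_Spaces.linear_iff by blast
lemma lin_scale: "Vector_Spaces.linear scale scale f \<Longrightarrow> f (scale c x) = scale c (f x)"
  unfolding Vector_Spaces.linear_iff by blast
lemma lin_zero: "Vector_Spaces.linear scale scale f \<Longrightarrow> f 0 = 0"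
  using lin_scale[of f 0 0] by simp
lemma lin_sum: "Vector_Spaces.linear scale scale f \<Longrightarrow> f (sum g A) = (\<Sum>a\<in>A. f (g a))"
  by (induct A rule: infinite_finite_induct) (simp_all add: lin_zero lin_add)
lemma lin_diff: "Vector_Spaces.linear scale scale f \<Longrightarrow> f (x - y) = f x - f y"
  using lin_add[of f "x - y" y] by (simp add: algebra_simps)

lemma op_poly_bound:
  assumes "degree p \<le> n"
  shows "op_poly scale p T v = (\<Sum>i\<le>n. scale (coeff p i) ((T ^^ i) v))"
proof -
  have "(\<Sum>i\<le>n. scale (coeff p i) ((T ^^ i) v)) =
        (\<Sum>i\<le>degree p. scale (coeff p i) ((T ^^ i) v)) + (\<Sum>i\<in>{degree p<..n}. scale (coeff p i) ((T ^^ i) v))"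
    using assms by (subst sum.union_disjoint[symmetric]) (auto intro!: sum.cong)
  also have "(\<Sum>i\<in>{degree p<..n}. scale (coeff p i) ((T ^^ i) v)) = 0"
    by (intro sum.neutral) (auto simp: coeff_eq_0)
  finally show ?thesis by (simp add: op_poly_def)
qed

lemma op_poly_add: "op_poly scale (p + q) T v = op_poly scale p T v + op_poly scale q T v"
proof -
  let ?n = "max (degree p) (degree q)"
  have "degree (p + q) \<le> ?n" by (rule degree_add_le) auto
  then show ?thesis
    by (simp add: op_poly_bound[of _ ?n] scale_left_distrib sum.distrib)
qed

lemma op_poly_smult: "op_poly scale (smult c p) T v = scale c (op_poly scale p T v)"
  by (simp add: op_poly_bound[of _ "degree p"] scale_sum_right)

lemma op_poly_0[simp]: "op_poly scale 0 T v = 0"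
  by (simp add: op_poly_def)

lemma op_poly_pCons:
  assumes T: "Vector_Spaces.linear scale scale T"
  shows "op_poly scale (pCons a p) T v = scale a v + T (op_poly scale p T v)"
proof -
  have d: "degree (pCons a p) \<le> Suc (degree p)" by simp
  have "op_poly scale (pCons a p) T v = (\<Sum>i\<le>Suc (degree p). scale (coeff (pCons a p) i) ((T ^^ i) v))"
    by (rule op_poly_bound[OF d])
  also have "\<dots> = scale a v + (\<Sum>i\<le>degree p. scale (coeff p i) ((T ^^ Suc i) v))"
    by (subst sum.atMost_Suc_shift) simp
  also have "(\<Sum>i\<le>degree p. scale (coeff p i) ((T ^^ Suc i) v)) = T (op_poly scale p T v)"
    by (simp add: op_poly_def lin_sum[OF T] lin_scale[OF T])
  finally show ?thesis .
qed

lemma op_poly_const: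
  assumes T: "Vector_Spaces.linear scale scale T"
  shows "op_poly scale [:a:] T v = scale a v"
  using op_poly_pCons[OF T, of a 0] by (simp add: lin_zero[OF T])

lemma op_poly_1:
  assumes T: "Vector_Spaces.linear scale scale T"
  shows "op_poly scale 1 T v = v"
  using op_poly_const[OF T, of 1] by (simp add: one_pCons)

lemma op_poly_x:
  assumes T: "Vector_Spaces.linear scale scale T"
  shows "op_poly scale [:0,1:] T v = T v"
  using op_poly_pCons[OF T, of 0 "[:1:]"] op_poly_const[OF T, of 1] by simp

lemma op_poly_mult:
  assumes T: "Vector_Spaces.linear scale scale T"
  shows "op_poly scale (p * q) T v = op_poly scale p T (op_poly scale q T v)"
proof (induction p)
  case 0
  then show ?case by simp
next
  case (pCons a p)
  have "pCons a p * q = smult a q + pCons 0 (p * q)" by simp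
  then show ?case
    using pCons by (simp add: op_poly_add op_poly_smult op_poly_pCons[OF T])
qed

lemma op_poly_add_v:
  assumes T: "Vector_Spaces.linear scale scale T"
  shows "op_poly scale p T (x + y) = op_poly scale p T x + op_poly scale p T y"
  by (induction p) (simp_all add: op_poly_pCons[OF T] lin_add[OF T] scale_right_distrib algebra_simps)

lemma op_poly_scale_v:
  assumes T: "Vector_Spaces.linear scale scale T"
  shows "op_poly scale p T (scale c x) = scale c (op_poly scale p T x)"
  by (induction p) (simp_all add: op_poly_pCons[OF T] lin_scale[OF T] scale_right_distrib mult.commute)

lemma op_poly_lin:
  assumes T: "Vector_Spaces.linear scale scale T"
  shows "Vector_Spaces.linear scale scale (op_poly scale p T)"
  unfolding Vector_Spaces.linear_iff
  by (simp add: vector_space_axioms op_poly_add_v[OF T] op_poly_scale_v[OF T])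

lemma op_poly_comm:
  assumes T: "Vector_Spaces.linear scale scale T" and X: "Vector_Spaces.linear scale scale X"
    and c: "\<And>u. X (T u) = T (X u) + scale d (X u)"
  shows "X (op_poly scale p T u) = op_poly scale (pcompose p [:d, 1:]) T (X u)"
proof (induction p)
  case 0
  then show ?case by (simp add: lin_zero[OF X])
next
  case (pCons a p)
  have e: "pcompose (pCons a p) [:d, 1:] = [:a:] + (smult d (pcompose p [:d, 1:]) + pCons 0 (pcompose p [:d, 1:]))"
    by (simp add: pcompose_pCons)
  show ?case
    unfolding e using pCons
    by (simp add: op_poly_add op_poly_smult op_poly_pCons[OF T] op_poly_const[OF T] lin_add[OF X]
        lin_scale[OF X] c lin_zero[OF T] add.assoc add.commute add.left_commute)
qed

end


definition Kc :: "int \<Rightarrow> int \<Rightarrow> complex" where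
  "Kc a b = (if even (a + b) then (-1) ^ nat \<bar>a\<bar>
             else (-1) ^ nat \<bar>a + 1\<bar> * (of_int a / 2 - of_int b / 2) * (2 / of_int (a + b)))"

lemma poly_shift[simp]: "poly (shift c p) y = poly p (y + c)"
  by (simp add: shift_def poly_pcompose add.commute)


lemma lin_form: "degree (p :: complex poly) \<le> 1 \<Longrightarrow> p = [:coeff p 0, coeff p 1:]"
  by (rule poly_eqI) (auto simp: coeff_pCons coeff_eq_0 split: nat.splits)

lemma shift_lin[simp]: "shift d [:a, b:] = [:a + b * d, b:]"
  by (simp add: shift_def pcompose_pCons algebra_simps)

lemma shift_const[simp]: "shift d [:a:] = [:a:]"
  by (simp add: shift_def)

lemma degree_shift[simp]: "degree (shift d p) = degree p"
  by (simp add: shift_def degree_pcompose)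

lemma prod_lin_deg:
  fixes p q :: "complex poly"
  assumes "p * q = [:c, e:]" "e \<noteq> 0"
  shows "p \<noteq> 0 \<and> q \<noteq> 0 \<and> degree p \<le> 1 \<and> degree q \<le> 1"
proof -
  have "p * q \<noteq> 0" using assms by auto
  then have "p \<noteq> 0" "q \<noteq> 0" by auto
  moreover have "degree (p * q) = 1" using assms by simp
  ultimately show ?thesis by (simp add: degree_mult_eq)
qed

locale polyrel =
  fixes A B :: "int \<Rightarrow> complex poly"
  assumes R1: "\<And>a b. B a * shift (of_int a / 2) (A b) + B b * shift (of_int b / 2) (A a) =
                 smult (Kc a b) ([:0, 1:] * A (a + b) + B (a + b))"
    and R2: "\<And>a b. A a * shift (of_int a / 2) (B b) + A b * shift (of_int b / 2) (B a) =
                 smult (Kc a b) (B (a + b) + [:of_int (a + b) / 2, 1:] * A (a + b))"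
    and A0: "A 0 = 1" and B0: "B 0 = [:0, 1:]"
begin

lemma E1: "poly (B b) y * poly (A (-b)) (y + of_int b / 2) + poly (B (-b)) y * poly (A b) (y - of_int b / 2)
           = (-1) ^ nat \<bar>b\<bar> * (2 * y)"
proof -
  have "poly (B b * shift (of_int b / 2) (A (-b)) + B (-b) * shift (of_int (-b) / 2) (A b)) y =
        poly (smult (Kc b (-b)) ([:0, 1:] * A (b + - b) + B (b + - b))) y"
    using R1[of b "-b"] by simp
  then show ?thesis by (simp add: Kc_def A0 B0 algebra_simps)
qed

lemma E2: "poly (A b) y * poly (B (-b)) (y + of_int b / 2) + poly (A (-b)) y * poly (B b) (y - of_int b / 2)
           = (-1) ^ nat \<bar>b\<bar> * (2 * y)"
proof -
  have "poly (A b * shift (of_int b / 2) (B (-b)) + A (-b) * shift (of_int (-b) / 2) (B b)) y =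
        poly (smult (Kc b (-b)) (B (b + - b) + [:of_int (b + - b) / 2, 1:] * A (b + - b))) y"
    using R2[of b "-b"] by simp
  then show ?thesis by (simp add: Kc_def A0 B0 algebra_simps)
qed

lemma H_step:
  fixes b :: int
  defines "H \<equiv> \<lambda>z. poly (B b) z * poly (A (-b)) (z + of_int b / 2)"
  shows "H (z + of_int b) = H z + (-1) ^ nat \<bar>b\<bar> * of_int b"
proof -
  have e2: "poly (A b) (z + of_int b / 2) * poly (B (-b)) (z + of_int b) + poly (A (-b)) (z + of_int b / 2) * poly (B b) z
           = (-1) ^ nat \<bar>b\<bar> * (2 * (z + of_int b / 2))"
    using E2[of b "z + of_int b / 2"] by (simp add: algebra_simps)
  have e1: "poly (B b) (z + of_int b) * poly (A (-b)) (z + of_int b + of_int b / 2) + poly (B (-b)) (z + of_int b) * poly (A b) (z + of_int b / 2)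
           = (-1) ^ nat \<bar>b\<bar> * (2 * (z + of_int b))"
    using E1[of b "z + of_int b"] by (simp add: algebra_simps)
  define P where "P = poly (B b) (z + of_int b) * poly (A (-b)) (z + of_int b + of_int b / 2)"
  define Q where "Q = poly (B (-b)) (z + of_int b) * poly (A b) (z + of_int b / 2)"
  define Hz where "Hz = poly (B b) z * poly (A (-b)) (z + of_int b / 2)"
  have e1': "P + Q = (-1) ^ nat \<bar>b\<bar> * (2 * (z + of_int b))" using e1 unfolding P_def Q_def .
  have e2': "Q + Hz = (-1) ^ nat \<bar>b\<bar> * (2 * (z + of_int b / 2))"
    using e2 unfolding Q_def Hz_def by (simp add: mult.commute)
  have "P = Hz + (-1) ^ nat \<bar>b\<bar> * of_int b"
  proof -
    have "P = (P + Q) - (Q + Hz) + Hz" by simp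
    also have "\<dots> = Hz + (-1) ^ nat \<bar>b\<bar> * of_int b" unfolding e1' e2' by (simp add: algebra_simps)
    finally show ?thesis .
  qed
  then show ?thesis unfolding H_def P_def Hz_def by simp
qed

lemma h_form:
  fixes b :: int
  assumes b: "b \<noteq> 0"
  shows "\<exists>c. B b * shift (of_int b / 2) (A (-b)) = [:c, (-1) ^ nat \<bar>b\<bar>:] \<and>
             B (-b) * shift (- of_int b / 2) (A b) = [:-c, (-1) ^ nat \<bar>b\<bar>:]"
proof -
  define e :: complex where "e = (-1) ^ nat \<bar>b\<bar>"
  define h where "h = B b * shift (of_int b / 2) (A (-b))"
  have ph: "poly h z = poly (B b) z * poly (A (-b)) (z + of_int b / 2)" for z
    by (simp add: h_def)
  have Hk: "poly h (of_nat k * of_int b) = poly h 0 + of_nat k * e * of_int b" for k :: nat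
  proof (induction k)
    case 0 then show ?case by simp
  next
    case (Suc k)
    have "poly h (of_nat (Suc k) * of_int b) = poly h (of_nat k * of_int b + of_int b)"
      by (simp add: algebra_simps)
    also have "\<dots> = poly h (of_nat k * of_int b) + e * of_int b"
      unfolding ph e_def using H_step[of b "of_nat k * of_int b"] by simp
    finally show ?case using Suc by (simp add: algebra_simps)
  qed
  define q where "q = h - [:poly h 0, e:]"
  have q0: "poly q (of_nat k * of_int b) = 0" for k :: nat
    unfolding q_def using Hk[of k] by (simp add: algebra_simps)
  have "q = 0"
  proof (rule ccontr)
    assume "q \<noteq> 0"
    then have fin: "finite {y. poly q y = 0}" by (rule poly_roots_finite)
    have "range (\<lambda>k::nat. (of_nat k * of_int b :: complex)) \<subseteq> {y. poly q y = 0}"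
      using q0 by auto
    moreover have "inj (\<lambda>k::nat. (of_nat k * of_int b :: complex))"
      using b by (auto simp: inj_def)
    then have "infinite (range (\<lambda>k::nat. (of_nat k * of_int b :: complex)))"
      by (rule range_inj_infinite)
    ultimately show False using fin finite_subset by blast
  qed
  then have h1: "h = [:poly h 0, e:]" unfolding q_def by simp
  have "h + B (-b) * shift (of_int (-b) / 2) (A b) = smult (Kc b (-b)) ([:0, 1:] * A (b + - b) + B (b + - b))"
    unfolding h_def by (rule R1)
  then have "B (-b) * shift (- of_int b / 2) (A b) = [:0, 2 * e:] - h"
    by (simp add: Kc_def A0 B0 e_def eq_diff_eq add.commute)
  then have "B (-b) * shift (- of_int b / 2) (A b) = [:- poly h 0, e:]"
    by (subst (asm) h1) simp
  then show ?thesis using h1 unfolding h_def e_def by blast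
qed

lemma evalR1: "poly (B a) y * poly (A b) (y + of_int a / 2) + poly (B b) y * poly (A a) (y + of_int b / 2) =
   Kc a b * (y * poly (A (a + b)) y + poly (B (a + b)) y)"
  using arg_cong[OF R1[of a b], of "\<lambda>p. poly p y"] by (simp add: algebra_simps)

lemma evalR2: "poly (A a) y * poly (B b) (y + of_int a / 2) + poly (A b) y * poly (B a) (y + of_int b / 2) =
   Kc a b * (poly (B (a + b)) y + (y + of_int (a + b) / 2) * poly (A (a + b)) y)"
  using arg_cong[OF R2[of a b], of "\<lambda>p. poly p y"] by (simp add: algebra_simps)

lemma A2_eq: "A 2 = smult 2 (B 1 * shift (1/2) (A 1) - A 1 * shift (1/2) (B 1))"
proof (rule poly_eq_poly_eq_iff[THEN iffD1, OF ext])
  fix y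
  have h1: "2 * (poly (B 1) y * poly (A 1) (y + 1/2)) = - (y * poly (A 2) y + poly (B 2) y)"
    using evalR1[of 1 y 1] by (simp add: Kc_def algebra_simps)
  have h2: "2 * (poly (A 1) y * poly (B 1) (y + 1/2)) = - (poly (B 2) y + (y + 1) * poly (A 2) y)"
    using evalR2[of 1 y 1] by (simp add: Kc_def algebra_simps)
  show "poly (A 2) y = poly (smult 2 (B 1 * shift (1/2) (A 1) - A 1 * shift (1/2) (B 1))) y"
    by (simp only: poly_smult poly_diff poly_mult poly_shift add_uminus_conv_diff) (use h1 h2 in algebra)
qed

lemma B2_eq: "B 2 = - smult 2 (B 1 * shift (1/2) (A 1)) - [:0, 1:] * A 2"
proof (rule poly_eq_poly_eq_iff[THEN iffD1, OF ext])
  fix y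
  have h1: "2 * (poly (B 1) y * poly (A 1) (y + 1/2)) = - (y * poly (A 2) y + poly (B 2) y)"
    using evalR1[of 1 y 1] by (simp add: Kc_def algebra_simps)
  show "poly (B 2) y = poly (- smult 2 (B 1 * shift (1/2) (A 1)) - [:0, 1:] * A 2) y"
    by (simp only: poly_smult poly_diff poly_mult poly_shift poly_minus poly_pCons poly_0 add_uminus_conv_diff) (use h1 in algebra)
qed

lemma Am2_eq: "A (-2) = smult 2 (A (-1) * shift (- (1/2)) (B (-1)) - B (-1) * shift (- (1/2)) (A (-1)))"
proof (rule poly_eq_poly_eq_iff[THEN iffD1, OF ext])
  fix y
  have h1: "2 * (poly (B (-1)) y * poly (A (-1)) (y - 1/2)) = - (y * poly (A (-2)) y + poly (B (-2)) y)"
    using evalR1[of "-1" y "-1"] by (simp add: Kc_def algebra_simps)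
  have h2: "2 * (poly (A (-1)) y * poly (B (-1)) (y - 1/2)) = - (poly (B (-2)) y + (y - 1) * poly (A (-2)) y)"
    using evalR2[of "-1" y "-1"] by (simp add: Kc_def algebra_simps)
  show "poly (A (-2)) y = poly (smult 2 (A (-1) * shift (- (1/2)) (B (-1)) - B (-1) * shift (- (1/2)) (A (-1)))) y"
    by (simp only: poly_smult poly_diff poly_mult poly_shift add_uminus_conv_diff) (use h1 h2 in algebra)
qed

lemma Bm2_eq: "B (-2) = - smult 2 (B (-1) * shift (- (1/2)) (A (-1))) - [:0, 1:] * A (-2)"
proof (rule poly_eq_poly_eq_iff[THEN iffD1, OF ext])
  fix y
  have h1: "2 * (poly (B (-1)) y * poly (A (-1)) (y - 1/2)) = - (y * poly (A (-2)) y + poly (B (-2)) y)"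
    using evalR1[of "-1" y "-1"] by (simp add: Kc_def algebra_simps)
  show "poly (B (-2)) y = poly (- smult 2 (B (-1) * shift (- (1/2)) (A (-1))) - [:0, 1:] * A (-2)) y"
    by (simp only: poly_smult poly_diff poly_mult poly_shift poly_minus poly_pCons poly_0 add_uminus_conv_diff) (use h1 in algebra)
qed


lemma mult_lin: "[:a, b:] * [:c, d:] = [:a * c, a * d + b * c, b * d:]"
  by (simp add: algebra_simps)

lemma normal_pm1:
  "\<exists>u \<alpha>. u \<noteq> 0 \<and> A 1 = [:u:] \<and> B 1 = [:- u * \<alpha>, - u:] \<and>
     A (-1) = [:1 / u:] \<and> B (-1) = [:\<alpha> / u, - 1 / u:]"
proof -
  obtain c1 where h1: "B 1 * shift (1/2) (A (-1)) = [:c1, -1:]"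
      and h1': "B (-1) * shift (- (1/2)) (A 1) = [:-c1, -1:]"
    using h_form[of 1] by auto
  obtain c2 where h2: "B 2 * shift 1 (A (-2)) = [:c2, 1:]"
      and h2': "B (-2) * shift (-1) (A 2) = [:-c2, 1:]"
    using h_form[of 2] by auto
  have dB1: "degree (B 1) \<le> 1" and dAm1: "degree (A (-1)) \<le> 1"
    using prod_lin_deg[OF h1] by auto
  have dBm1: "degree (B (-1)) \<le> 1" and dA1: "degree (A 1) \<le> 1"
    using prod_lin_deg[OF h1'] by auto
  define a0 a1 b0 b1 e0 e1 d0 d1 where "a0 = coeff (A 1) 0" "a1 = coeff (A 1) 1"
    "b0 = coeff (B 1) 0" "b1 = coeff (B 1) 1" "e0 = coeff (A (-1)) 0" "e1 = coeff (A (-1)) 1"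
    "d0 = coeff (B (-1)) 0" "d1 = coeff (B (-1)) 1"
  have fA1: "A 1 = [:a0, a1:]" using lin_form[OF dA1] a0_a1_b0_b1_e0_e1_d0_d1_def by simp
  have fB1: "B 1 = [:b0, b1:]" using lin_form[OF dB1] a0_a1_b0_b1_e0_e1_d0_d1_def by simp
  have fAm1: "A (-1) = [:e0, e1:]" using lin_form[OF dAm1] a0_a1_b0_b1_e0_e1_d0_d1_def by simp
  have fBm1: "B (-1) = [:d0, d1:]" using lin_form[OF dBm1] a0_a1_b0_b1_e0_e1_d0_d1_def by simp
  define g where "g = b0 * a1 - a0 * b1"
  define g' where "g' = d0 * e1 - e0 * d1"
  have fA2: "A 2 = [:g:]"
  proof (rule poly_eq_poly_eq_iff[THEN iffD1, OF ext])
    fix y show "poly (A 2) y = poly [:g:] y"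
      unfolding A2_eq fA1 fB1 g_def by (simp; algebra)
  qed
  have fAm2: "A (-2) = [:g':]"
  proof (rule poly_eq_poly_eq_iff[THEN iffD1, OF ext])
    fix y show "poly (A (-2)) y = poly [:g':] y"
      unfolding Am2_eq fAm1 fBm1 g'_def by (simp; algebra)
  qed
  have fB2: "B 2 = [:- 2 * b0 * (a0 + a1 / 2), - 2 * (b0 * a1 + b1 * (a0 + a1 / 2)) - g, - 2 * b1 * a1:]"
    unfolding B2_eq fA1 fB1 fA2 by (simp add: algebra_simps)
  have fBm2: "B (-2) = [:- 2 * d0 * (e0 - e1 / 2), - 2 * (d0 * e1 + d1 * (e0 - e1 / 2)) - g', - 2 * d1 * e1:]"
    unfolding Bm2_eq fAm1 fBm1 fAm2 by (simp add: algebra_simps)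
  have s: "b1 * e1 = 0" "b0 * e1 + b1 * (e0 + e1 / 2) = -1" "b0 * (e0 + e1 / 2) = c1"
    using h1 unfolding fB1 fAm1 by (simp_all only: shift_lin mult_lin pCons_eq_iff pCons_eq_0_iff) (auto simp: algebra_simps)
  have t: "d1 * a1 = 0" "d0 * a1 + d1 * (a0 - a1 / 2) = -1" "d0 * (a0 - a1 / 2) = -c1"
    using h1' unfolding fBm1 fA1 by (simp_all only: shift_lin mult_lin pCons_eq_iff pCons_eq_0_iff) (auto simp: algebra_simps)
  have u: "b1 * a1 * g' = 0" "g' * (- (2 * (b0 * a1)) - 2 * (b1 * (a0 + a1 / 2)) - g) = 1"
    using h2 unfolding fB2 fAm2 by (auto simp: mult_lin)
  have w: "d1 * e1 * g = 0" "g * (- (2 * (d0 * e1)) - 2 * (d1 * (e0 - e1 / 2)) - g') = 1"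
    using h2' unfolding fBm2 fA2 by (auto simp: mult_lin)
  have gp: "g' \<noteq> 0" using u(2) by auto
  have gnz: "g \<noteq> 0" using w(2) by auto
  have a1z: "a1 = 0"
  proof (rule ccontr)
    assume a1: "a1 \<noteq> 0"
    have b1: "b1 = 0" using u(1) a1 gp by simp
    have d1: "d1 = 0" using t(1) a1 by simp
    have be: "b0 * e1 = -1" using s(2) b1 by simp
    have da: "d0 * a1 = -1" using t(2) d1 by simp
    have gg: "g = b0 * a1" "g' = d0 * e1" by (simp_all add: g_def g'_def b1 d1)
    have "g' * (- (2 * (b0 * a1)) - g) = 1" using u(2) b1 by simp
    then have "(1::complex) = -3" using be da gg by algebra
    then show False by simp
  qed
  have e1z: "e1 = 0"
  proof (rule ccontr)
    assume e1: "e1 \<noteq> 0"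
    have b1: "b1 = 0" using s(1) e1 by simp
    have d1: "d1 = 0" using w(1) e1 gnz by simp
    show False using t(2) d1 a1z by simp
  qed
  have s2: "b1 * e0 = -1" and s3: "b0 * e0 = c1" using s(2,3) e1z by simp_all
  have t2: "d1 * a0 = -1" and t3: "d0 * a0 = -c1" using t(2,3) a1z by simp_all
  have gg: "g = - a0 * b1" by (simp add: g_def a1z)
  have k: "Kc 2 (-1) = -3" by (simp add: Kc_def)
  have E: "(- 2 * b0 * a0 + (- 2 * b1 * a0 - g) * y) * e0 + (d0 + d1 * y) * g = -3 * (y * a0 + b0 + b1 * y)" for y
  proof -
    have "poly (B 2) y * poly (A (-1)) (y + of_int 2 / 2) + poly (B (-1)) y * poly (A 2) (y + of_int (-1) / 2) =
      Kc 2 (-1) * (y * poly (A (2 + -1)) y + poly (B (2 + -1)) y)"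
      by (rule evalR1)
    then show ?thesis unfolding k by (simp add: fB2 fAm1 fBm1 fA2 fA1 fB1 a1z e1z algebra_simps)
  qed
  have E0: "(- 2 * b0 * a0) * e0 + d0 * g = -3 * b0" using E[of 0] by simp
  have E1: "(- 2 * b0 * a0 + (- 2 * b1 * a0 - g)) * e0 + (d0 + d1) * g = -3 * (a0 + b0 + b1)" using E[of 1] by simp
  have b1a0: "b1 = - a0" using E0 E1 s2 t2 gg by algebra
  have a0nz: "a0 \<noteq> 0" using t2 by auto
  have e0v: "e0 = 1 / a0" using s2 b1a0 a0nz by (simp add: field_simps)
  have d1v: "d1 = - 1 / a0" using t2 a0nz by (simp add: field_simps)
  have d0v: "d0 = (- b0 / a0) / a0" using t3 s3 e0v a0nz by (simp add: field_simps)
  show ?thesis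
  proof (intro exI conjI)
    show "a0 \<noteq> 0" by (rule a0nz)
    show "A 1 = [:a0:]" by (simp add: fA1 a1z)
    show "B 1 = [:- a0 * (- b0 / a0), - a0:]" using a0nz by (simp add: fB1 b1a0)
    show "A (-1) = [:1 / a0:]" by (simp add: fAm1 e1z e0v)
    show "B (-1) = [:(- b0 / a0) / a0, - 1 / a0:]" by (simp add: fBm1 d0v d1v)
  qed
qed

end


definition CA :: "complex \<Rightarrow> int \<Rightarrow> complex poly" where "CA u b = [:u powi b:]"
definition CB :: "complex \<Rightarrow> complex \<Rightarrow> int \<Rightarrow> complex poly" where
  "CB u \<alpha> b = smult ((-u) powi b) [:of_int b * \<alpha>, 1:]"

lemma sgn_pow: "(-1::complex) ^ nat \<bar>a\<bar> = (if even a then 1 else -1)"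
  by (simp add: minus_one_power_iff even_nat_iff)

lemma Kc_even: "even (a + b) \<Longrightarrow> Kc a b = (if even a then 1 else -1)"
  by (simp add: Kc_def sgn_pow)

lemma half_cancel: "((x::complex) / 2 - y / 2) * (2 / s) = (x - y) / s"
proof -
  have "(x / 2 - y / 2) = (x - y) / 2" by (simp add: diff_divide_distrib)
  then show ?thesis by simp
qed

lemma Kc_odd: "odd (a + b) \<Longrightarrow> Kc a b = (if even a then -1 else 1) * (of_int a - of_int b) / (of_int a + of_int b)"
  unfolding Kc_def using half_cancel[of "of_int a" "of_int b" "of_int (a + b)"]
  by (simp add: sgn_pow even_add)

lemma cand_R1:
  assumes u: "u \<noteq> 0"
  shows "CB u \<alpha> a * shift (of_int a / 2) (CA u b) + CB u \<alpha> b * shift (of_int b / 2) (CA u a) =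
         smult (Kc a b) ([:0, 1:] * CA u (a + b) + CB u \<alpha> (a + b))"
proof (rule poly_eq_poly_eq_iff[THEN iffD1, OF ext])
  fix y
  have pa: "u powi (a + b) = u powi a * u powi b" using u by (simp add: power_int_add)
  have nz: "odd (a + b) \<Longrightarrow> (of_int (a + b) :: complex) \<noteq> 0"
    by (metis even_zero of_int_eq_0_iff)
  show "poly (CB u \<alpha> a * shift (of_int a / 2) (CA u b) + CB u \<alpha> b * shift (of_int b / 2) (CA u a)) y =
        poly (smult (Kc a b) ([:0, 1:] * CA u (a + b) + CB u \<alpha> (a + b))) y"
  proof (cases "even (a + b)")
    case True
    then show ?thesis
      by (cases "even a") (auto simp: CA_def CB_def power_int_minus_left pa Kc_even even_add algebra_simps)
  next
    case False
    then show ?thesis using nz[OF False]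
      by (cases "even a") (auto simp: CA_def CB_def power_int_minus_left pa Kc_odd even_add field_simps)
  qed
qed

lemma cand_R2:
  assumes u: "u \<noteq> 0"
  shows "CA u a * shift (of_int a / 2) (CB u \<alpha> b) + CA u b * shift (of_int b / 2) (CB u \<alpha> a) =
         smult (Kc a b) (CB u \<alpha> (a + b) + [:of_int (a + b) / 2, 1:] * CA u (a + b))"
proof (rule poly_eq_poly_eq_iff[THEN iffD1, OF ext])
  fix y
  have pa: "u powi (a + b) = u powi a * u powi b" using u by (simp add: power_int_add)
  have nz: "odd (a + b) \<Longrightarrow> (of_int (a + b) :: complex) \<noteq> 0"
    by (metis even_zero of_int_eq_0_iff)
  show "poly (CA u a * shift (of_int a / 2) (CB u \<alpha> b) + CA u b * shift (of_int b / 2) (CB u \<alpha> a)) y =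
        poly (smult (Kc a b) (CB u \<alpha> (a + b) + [:of_int (a + b) / 2, 1:] * CA u (a + b))) y"
  proof (cases "even (a + b)")
    case True
    then show ?thesis
      by (cases "even a") (auto simp: CA_def CB_def power_int_minus_left pa Kc_even even_add algebra_simps)
  next
    case False
    have nz2: "(of_int a * 2 + of_int b * 2 :: complex) \<noteq> 0" 
    proof -
      have "(of_int a * 2 + of_int b * 2 :: complex) = (of_int a + of_int b) * 2" by (simp add: algebra_simps)
      then show ?thesis using nz[OF False] by (metis mult_eq_0_iff of_int_add zero_neq_numeral)
    qed
    then show ?thesis using nz[OF False] False
      by (cases "even a") (auto simp: CA_def CB_def power_int_minus_left pa Kc_odd even_add field_simps)
  qed
qed


lemma Kc_nz: "Kc a b \<noteq> 0"
proof (cases "even (a + b)")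
  case True then show ?thesis by (simp add: Kc_even)
next
  case False
  have ab: "a + b \<noteq> 0"
  proof
    assume "a + b = 0"
    with False show False by simp
  qed
  have "a - b \<noteq> 0"
  proof
    assume "a - b = 0"
    then have "a + b = 2 * a" by simp
    then show False using False by simp
  qed
  note ab this
  then have "a + b \<noteq> 0" "a - b \<noteq> 0" by auto
  then have "(of_int a + of_int b :: complex) \<noteq> 0" "(of_int a - of_int b :: complex) \<noteq> 0"
    by (metis of_int_add of_int_eq_0_iff, metis of_int_diff of_int_eq_0_iff)
  then show ?thesis using False by (simp add: Kc_odd)
qed

context polyrel
begin

lemma step:
  assumes u: "u \<noteq> 0" and m: "s + n \<noteq> 0"
    and hs: "A s = CA u s" "B s = CB u \<alpha> s" and hn: "A n = CA u n" "B n = CB u \<alpha> n"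
  shows "A (s + n) = CA u (s + n) \<and> B (s + n) = CB u \<alpha> (s + n)"
proof -
  have r1: "smult (Kc s n) ([:0, 1:] * A (s + n) + B (s + n)) = smult (Kc s n) ([:0, 1:] * CA u (s + n) + CB u \<alpha> (s + n))"
    using R1[of s n] cand_R1[OF u, of \<alpha> s n] hs hn by simp
  have r2: "smult (Kc s n) (B (s + n) + [:of_int (s + n) / 2, 1:] * A (s + n)) =
            smult (Kc s n) (CB u \<alpha> (s + n) + [:of_int (s + n) / 2, 1:] * CA u (s + n))"
    using R2[of s n] cand_R2[OF u, of s \<alpha> n] hs hn by simp
  have K: "Kc s n \<noteq> 0" by (rule Kc_nz)
  have m2: "(of_int (s + n) :: complex) \<noteq> 0" using m by (simp only: of_int_eq_0_iff) simp
  have r1': "[:0, 1:] * A (s + n) + B (s + n) = [:0, 1:] * CA u (s + n) + CB u \<alpha> (s + n)"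
    using arg_cong[OF r1, of "smult (inverse (Kc s n))"] K by simp
  have r2': "B (s + n) + [:of_int (s + n) / 2, 1:] * A (s + n) = CB u \<alpha> (s + n) + [:of_int (s + n) / 2, 1:] * CA u (s + n)"
    using arg_cong[OF r2, of "smult (inverse (Kc s n))"] K by simp
  have e1: "y * poly (A (s + n)) y + poly (B (s + n)) y = y * poly (CA u (s + n)) y + poly (CB u \<alpha> (s + n)) y" for y
    using arg_cong[OF r1', of "\<lambda>p. poly p y"] by simp
  have e2: "poly (B (s + n)) y + (of_int (s + n) / 2 + y) * poly (A (s + n)) y =
            poly (CB u \<alpha> (s + n)) y + (of_int (s + n) / 2 + y) * poly (CA u (s + n)) y" for y
    using arg_cong[OF r2', of "\<lambda>p. poly p y"] by (simp add: algebra_simps)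
  have pa: "poly (A (s + n)) y = poly (CA u (s + n)) y" for y
  proof -
    have "(of_int (s + n) / 2) * (poly (A (s + n)) y - poly (CA u (s + n)) y) = 0"
      using e1[of y] e2[of y] by algebra
    then show ?thesis using m2 by simp
  qed
  have pb: "poly (B (s + n)) y = poly (CB u \<alpha> (s + n)) y" for y
    using e1[of y] pa[of y] by simp
  show ?thesis using pa pb by (simp add: poly_eq_poly_eq_iff[symmetric] fun_eq_iff)
qed

lemma solve: "\<exists>u \<alpha>. u \<noteq> 0 \<and> (\<forall>b. A b = CA u b \<and> B b = CB u \<alpha> b)"
proof -
  obtain u \<alpha> where u: "u \<noteq> 0" and h1: "A 1 = [:u:]" "B 1 = [:- u * \<alpha>, - u:]"
    and hm1: "A (-1) = [:1 / u:]" "B (-1) = [:\<alpha> / u, - 1 / u:]"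
    using normal_pm1 by blast
  have c1: "A 1 = CA u 1" "B 1 = CB u \<alpha> 1" using h1 by (simp_all add: CA_def CB_def)
  have cm1: "A (-1) = CA u (-1)" "B (-1) = CB u \<alpha> (-1)"
    using hm1 u by (simp_all add: CA_def CB_def power_int_minus field_simps)
  have c0: "A 0 = CA u 0" "B 0 = CB u \<alpha> 0" by (simp_all add: CA_def CB_def A0 B0 one_pCons)
  have up: "A (int k + 1) = CA u (int k + 1) \<and> B (int k + 1) = CB u \<alpha> (int k + 1)" for k
  proof (induction k)
    case 0 then show ?case using c1 by simp
  next
    case (Suc k)
    have "A (1 + (int k + 1)) = CA u (1 + (int k + 1)) \<and> B (1 + (int k + 1)) = CB u \<alpha> (1 + (int k + 1))"
      using Suc c1 by (intro step[OF u]) auto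
    then show ?case by (simp add: add.commute add.left_commute)
  qed
  have dn: "A (- int k - 1) = CA u (- int k - 1) \<and> B (- int k - 1) = CB u \<alpha> (- int k - 1)" for k
  proof (induction k)
    case 0 then show ?case using cm1 by simp
  next
    case (Suc k)
    have "A (-1 + (- int k - 1)) = CA u (-1 + (- int k - 1)) \<and> B (-1 + (- int k - 1)) = CB u \<alpha> (-1 + (- int k - 1))"
      using Suc cm1 by (intro step[OF u]) auto
    then show ?case by (simp add: algebra_simps)
  qed
  have "A b = CA u b \<and> B b = CB u \<alpha> b" for b
  proof -
    consider "b = 0" | "b \<ge> 1" | "b \<le> -1" by linarith
    then show ?thesis
    proof cases
      case 1 then show ?thesis using c0 by simp
    next
      case 2
      then have "b = int (nat (b - 1)) + 1" by simp
      then show ?thesis using up[of "nat (b - 1)"] by simp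
    next
      case 3
      then have "b = - int (nat (- b - 1)) - 1" by simp
      then show ?thesis using dn[of "nat (- b - 1)"] by simp
    qed
  qed
  then show ?thesis using u by blast
qed

end



lemma sq_poly:
  fixes h k :: "complex poly"
  assumes e: "h * h - [:0, 1:] * (k * k) = 1"
  shows "k = 0 \<and> (h = 1 \<or> h = -1)"
proof -
  have k0: "k = 0"
  proof (rule ccontr)
    assume k: "k \<noteq> 0"
    define X where "X = [:0, 1:] * (k * k)"
    have kk: "k * k \<noteq> 0" using k by simp
    have d1: "degree X = degree [:0, 1::complex:] + degree (k * k)"
      unfolding X_def using kk by (intro degree_mult_eq) simp_all
    have d2: "degree (k * k) = degree k + degree k" by (rule degree_mult_eq[OF k k])
    have dk: "degree X = 1 + 2 * degree k" using d1 d2 by simp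
    have dh: "degree (h * h) = 2 * degree h"
    proof (cases "h = 0")
      case True then show ?thesis by simp
    next
      case False then show ?thesis using degree_mult_eq[OF False False] by simp
    qed
    have "even (degree (h * h))" "odd (degree X)" unfolding dk dh by simp_all
    then have ne: "degree (h * h) \<noteq> degree X" by auto
    have "degree (h * h - X) \<ge> 1"
    proof (cases "degree (h * h) < degree X")
      case True
      have "degree (h * h + - X) = degree (- X)"
        by (rule degree_add_eq_right) (simp add: True)
      then have "degree (h * h - X) = degree X" by (simp only: diff_conv_add_uminus degree_minus)
      then show ?thesis using dk by simp
    next
      case False
      then have lt: "degree X < degree (h * h)" using ne by simp
      have "degree (h * h + - X) = degree (h * h)"
        by (rule degree_add_eq_left) (simp add: lt)
      then have "degree (h * h - X) = degree (h * h)" by (simp only: diff_conv_add_uminus)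
      then show ?thesis using lt by simp
    qed
    moreover have "h * h - X = 1" using e unfolding X_def .
    ultimately show False by simp
  qed
  then have hh: "h * h = 1" using e by simp
  then have "h \<noteq> 0" by auto
  then have "degree h = 0" using hh degree_mult_eq[of h h] by simp
  then obtain c where hc: "h = [:c:]" by (metis degree_eq_zeroE)
  then have "c * c = 1" using hh by (simp add: one_pCons)
  then have "(c - 1) * (c + 1) = 0" by (simp add: algebra_simps)
  then have "c = 1 \<or> c = -1" by (auto simp: add_eq_0_iff2)
  then show ?thesis using k0 hc by (auto simp: one_pCons)
qed

locale Tm = cvs scale for scale :: "complex \<Rightarrow> 'v::ab_group_add \<Rightarrow> 'v" +
  fixes V0 V1 :: "'v set" and L I G :: "int \<Rightarrow> 'v \<Rightarrow> 'v"
  assumes TM: "is_T_module scale V0 V1 L I G"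
begin

lemma c_sub0: "subspace V0"
  using TM unfolding is_T_module_def by (elim conjE) assumption

lemma c_sub1: "subspace V1"
  using TM unfolding is_T_module_def by (elim conjE) assumption

lemma c_inter: "V0 \<inter> V1 = {0}"
  using TM unfolding is_T_module_def by (elim conjE) assumption

lemma c_dec: "\<forall>v. \<exists>v0\<in>V0. \<exists>v1\<in>V1. v = v0 + v1"
  using TM unfolding is_T_module_def by (elim conjE) assumption

lemma c_linL: "\<forall>m. Vector_Spaces.linear scale scale (L m)"
  using TM unfolding is_T_module_def by (elim conjE) assumption

lemma c_linG: "\<forall>b. Vector_Spaces.linear scale scale (G b)"
  using TM unfolding is_T_module_def by (elim conjE) assumption

lemma c_LV: "\<forall>m. L m ` V0 \<subseteq> V0 \<and> L m ` V1 \<subseteq> V1"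
  using TM unfolding is_T_module_def by (elim conjE) assumption

lemma c_GV: "\<forall>b. G b ` V0 \<subseteq> V1 \<and> G b ` V1 \<subseteq> V0"
  using TM unfolding is_T_module_def by (elim conjE) assumption

lemma c_rLG: "\<forall>m b v. L m (G b v) - G b (L m v) = scale (of_int m / 2 - of_int b / 2) (G (2 * m + b) v)"
  using TM unfolding is_T_module_def by (elim conjE) assumption

lemma c_rGG: "\<forall>a b v. G a (G b v) + G b (G a v) =
        (if even (a + b)
         then scale ((-1) ^ nat \<bar>a\<bar> * 2) (L ((a + b) div 2) v)
         else scale ((-1) ^ nat \<bar>a + 1\<bar> * (of_int a / 2 - of_int b / 2)) (I (a + b) v))"
  using TM unfolding is_T_module_def by (elim conjE) assumption

lemma sub0: "subspace V0" by (rule c_sub0)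
lemma sub1: "subspace V1" by (rule c_sub1)
lemma inter: "V0 \<inter> V1 = {0}" by (rule c_inter)
lemma dec: "\<exists>v0\<in>V0. \<exists>v1\<in>V1. v = v0 + v1" using c_dec by (rule spec)
lemma linL: "Vector_Spaces.linear scale scale (L m)" using c_linL by (rule spec)
lemma linG: "Vector_Spaces.linear scale scale (G b)" using c_linG by (rule spec)
lemma L_V0: "u \<in> V0 \<Longrightarrow> L m u \<in> V0" using c_LV by blast
lemma L_V1: "u \<in> V1 \<Longrightarrow> L m u \<in> V1" using c_LV by blast
lemma G_V0: "u \<in> V0 \<Longrightarrow> G b u \<in> V1" using c_GV by blast
lemma G_V1: "u \<in> V1 \<Longrightarrow> G b u \<in> V0" using c_GV by blast
lemma rLG: "L m (G b w) - G b (L m w) = scale (of_int m / 2 - of_int b / 2) (G (2 * m + b) w)"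
  using c_rLG by (rule allE) (erule allE, erule allE)
lemma rGG: "G a (G b w) + G b (G a w) =
        (if even (a + b)
         then scale ((-1) ^ nat \<bar>a\<bar> * 2) (L ((a + b) div 2) w)
         else scale ((-1) ^ nat \<bar>a + 1\<bar> * (of_int a / 2 - of_int b / 2)) (I (a + b) w))"
  using c_rGG by (rule allE) (erule allE, erule allE)

lemma dbl: fixes x :: 'v shows "x + x = scale 2 x"
proof -
  have "scale (1 + 1) x = scale 1 x + scale 1 x" by (rule scale_left_distrib)
  then show ?thesis by (simp add: one_add_one)
qed

lemma half_eq: fixes x y :: 'v shows "x + x = scale 2 y \<Longrightarrow> x = y"
proof -
  assume a: "x + x = scale 2 y"
  have "x = scale (1/2) (scale 2 x)" by (simp add: scale_scale)
  also have "scale 2 x = scale 2 y" using a dbl[of x] by simp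
  also have "scale (1/2) (scale 2 y) = y" by (simp add: scale_scale)
  finally show "x = y" .
qed

lemma self_add_0: fixes x :: 'v shows "x + x = 0 \<Longrightarrow> x = 0"
  using half_eq[of x 0] by simp

lemma GG0: "G 0 (G 0 u) = L 0 u"
proof (rule half_eq)
  show "G 0 (G 0 u) + G 0 (G 0 u) = scale 2 (L 0 u)"
    using rGG[of 0 0 u] by simp
qed

lemma commG: "G b (L 0 u) = L 0 (G b u) + scale (of_int b / 2) (G b u)"
proof -
  have "L 0 (G b u) - G b (L 0 u) = scale (- (of_int b / 2)) (G b u)"
    using rLG[of 0 b u] by simp
  then show ?thesis by (simp add: algebra_simps scale_minus_left)
qed

lemma Lform: "L m u = scale (1/2) (G 0 (G (2 * m) u) + G (2 * m) (G 0 u))"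
  using rGG[of 0 "2 * m" u] by simp

lemma Iform: "odd a \<Longrightarrow> I a u = scale (2 / of_int a) (G 0 (G a u) + G a (G 0 u))"
proof -
  assume a: "odd a"
  then have "G 0 (G a u) + G a (G 0 u) = scale (of_int a / 2) (I a u)"
    using rGG[of 0 a u] by simp
  moreover have "(of_int a :: complex) \<noteq> 0" using a by (metis even_zero of_int_eq_0_iff)
  ultimately show ?thesis by simp
qed

lemma GGK: "G a (G b u) + G b (G a u) = scale (Kc a b) (G 0 (G (a + b) u) + G (a + b) (G 0 u))"
proof (cases "even (a + b)")
  case True
  then have m: "2 * ((a + b) div 2) = a + b" by simp
  show ?thesis
    using rGG[of a b u] True Lform[of "(a + b) div 2" u] unfolding m by (simp add: Kc_def)
next
  case False
  show ?thesis
    using rGG[of a b u] False Iform[OF False, of u] by (simp add: Kc_def mult.assoc)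
qed

lemma op_V:
  assumes S: "subspace S" and LS: "\<And>u. u \<in> S \<Longrightarrow> L 0 u \<in> S" and u: "u \<in> S"
  shows "op_poly scale p (L 0) u \<in> S"
proof (induction p)
  case 0 then show ?case using S by (simp add: subspace_0)
next
  case (pCons a p)
  then show ?case using S LS u by (simp add: op_poly_pCons[OF linL] subspace_add subspace_scale)
qed

lemma dec_unique:
  assumes "x0 + x1 = y0 + y1" "x0 \<in> V0" "y0 \<in> V0" "x1 \<in> V1" "y1 \<in> V1"
  shows "x0 = y0 \<and> x1 = y1"
proof -
  have "x0 - y0 = y1 - x1" using assms(1) by (simp add: algebra_simps)
  moreover have "x0 - y0 \<in> V0" using assms sub0 by (simp add: subspace_diff)
  moreover have "y1 - x1 \<in> V1" using assms sub1 by (simp add: subspace_diff)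
  ultimately have "y1 - x1 \<in> V0 \<inter> V1" by simp
  then have "y1 - x1 = 0" using inter by blast
  then have "x1 = y1" by simp
  then show ?thesis using assms(1) by simp
qed

end



locale Tv = Tm +
  fixes v
  assumes bijP: "bij (\<lambda>(a, b). op_poly scale a (L 0) v + op_poly scale b (L 0) (G 0 v))"
begin

definition Phi where
  "Phi f g = op_poly scale f (L 0) v + op_poly scale g (L 0) (G 0 v)"

lemma Phi_inj: "Phi f g = Phi f' g' \<Longrightarrow> f = f' \<and> g = g'"
proof -
  assume e: "Phi f g = Phi f' g'"
  have "inj (\<lambda>(a, b). op_poly scale a (L 0) v + op_poly scale b (L 0) (G 0 v))"
    using bijP by (rule bij_is_inj)
  then have "(f, g) = (f', g')" using e unfolding Phi_def inj_def by auto
  then show ?thesis by simp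
qed

lemma Phi_surj: "\<exists>f g. u = Phi f g"
proof -
  have "surj (\<lambda>(a, b). op_poly scale a (L 0) v + op_poly scale b (L 0) (G 0 v))"
    using bijP by (rule bij_is_surj)
  then obtain p where "u = (\<lambda>(a, b). op_poly scale a (L 0) v + op_poly scale b (L 0) (G 0 v)) p"
    by (metis surjD)
  then show ?thesis unfolding Phi_def by (cases p) auto
qed

lemma Phi_add: "Phi f g + Phi f' g' = Phi (f + f') (g + g')"
  unfolding Phi_def by (simp add: op_poly_add algebra_simps)

lemma Phi_smult: "scale c (Phi f g) = Phi (smult c f) (smult c g)"
  unfolding Phi_def by (simp add: op_poly_smult scale_right_distrib)

lemma Phi_00: "Phi 0 0 = 0"
  unfolding Phi_def by simp

lemma Phi_eq_iff: "Phi f g = Phi f' g' \<longleftrightarrow> f = f' \<and> g = g'"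
  using Phi_inj by blast

lemma opL0: "L 0 (op_poly scale f (L 0) u) = op_poly scale ([:0, 1:] * f) (L 0) u"
  by (simp add: op_poly_pCons[OF linL])

lemma opL0': "op_poly scale f (L 0) (L 0 u) = L 0 (op_poly scale f (L 0) u)"
proof -
  have "L 0 (op_poly scale f (L 0) u) = op_poly scale (pcompose f [:0, 1:]) (L 0) (L 0 u)"
    by (rule op_poly_comm[OF linL linL]) simp
  then show ?thesis by simp
qed

lemma opG: "G b (op_poly scale f (L 0) u) = op_poly scale (shift (of_int b / 2) f) (L 0) (G b u)"
  unfolding shift_def by (rule op_poly_comm[OF linL linG]) (rule commG)

lemma opG0: "G 0 (op_poly scale f (L 0) u) = op_poly scale f (L 0) (G 0 u)"
  using opG[of 0 f u] by (simp add: shift_def)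

lemma Phi_L0: "L 0 (Phi f g) = Phi ([:0, 1:] * f) ([:0, 1:] * g)"
  unfolding Phi_def by (simp add: lin_add[OF linL] opL0)

lemma Phi_G0: "G 0 (Phi f g) = Phi ([:0, 1:] * g) f"
proof -
  have "G 0 (Phi f g) = op_poly scale f (L 0) (G 0 v) + op_poly scale g (L 0) (L 0 v)"
    unfolding Phi_def by (simp add: lin_add[OF linG] opG0 GG0)
  also have "op_poly scale g (L 0) (L 0 v) = op_poly scale ([:0, 1:] * g) (L 0) v"
    by (simp only: opL0' opL0)
  finally show ?thesis unfolding Phi_def by (simp add: add.commute)
qed

lemma Phi_0g: "Phi 0 g = op_poly scale g (L 0) (G 0 v)"
  by (simp add: Phi_def)

lemma Phi_f0: "Phi f 0 = op_poly scale f (L 0) v"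
  by (simp add: Phi_def)

lemma Phi_Gb:
  assumes a: "G b v = Phi 0 Ab" and bb: "G b (G 0 v) = Phi Bb 0"
  shows "G b (Phi f g) = Phi (Bb * shift (of_int b / 2) g) (Ab * shift (of_int b / 2) f)"
proof -
  have "G b (Phi f g) = op_poly scale (shift (of_int b / 2) f) (L 0) (G b v) +
                        op_poly scale (shift (of_int b / 2) g) (L 0) (G b (G 0 v))"
    unfolding Phi_def by (simp add: lin_add[OF linG] opG)
  also have "\<dots> = op_poly scale (shift (of_int b / 2) f * Ab) (L 0) (G 0 v) +
                   op_poly scale (shift (of_int b / 2) g * Bb) (L 0) v"
    unfolding a bb Phi_0g Phi_f0 by (simp add: op_poly_mult[OF linL])
  finally show ?thesis unfolding Phi_def by (simp add: mult.commute add.commute)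
qed

lemma op_poly_diff: "op_poly scale (p - q) T u = op_poly scale p T u - op_poly scale q T u"
proof -
  have "op_poly scale p T u = op_poly scale (p - q) T u + op_poly scale q T u"
    using op_poly_add[of "p - q" q T u] by simp
  then show ?thesis by (simp add: algebra_simps)
qed

lemma Phi_op: "op_poly scale h (L 0) (Phi a b) = Phi (h * a) (h * b)"
  unfolding Phi_def by (simp add: op_poly_add_v[OF linL] op_poly_mult[OF linL])

lemma Phi_diff: "Phi a b - Phi c d = Phi (a - c) (b - d)"
  unfolding Phi_def by (simp add: op_poly_diff algebra_simps)

lemma Phi_1: "Phi 1 0 = v"
  by (simp add: Phi_def op_poly_1[OF linL])

lemma v_hom: "v \<in> V0 \<or> v \<in> V1"
proof -
  obtain v0 v1 where v0: "v0 \<in> V0" and v1: "v1 \<in> V1" and vv: "v = v0 + v1"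
    using dec[of v] by blast
  obtain h k where hk: "v0 - v1 = Phi h k" using Phi_surj by blast
  have P0: "op_poly scale h (L 0) v0 + op_poly scale k (L 0) (G 0 v1) \<in> V0"
    using v0 v1 sub0 by (intro subspace_add op_V G_V1 L_V0) auto
  have P1: "op_poly scale h (L 0) v1 + op_poly scale k (L 0) (G 0 v0) \<in> V1"
    using v0 v1 sub1 by (intro subspace_add op_V G_V0 L_V1) auto
  have "Phi h k = op_poly scale h (L 0) v + op_poly scale k (L 0) (G 0 v)" by (simp add: Phi_def)
  then have "Phi h k = op_poly scale h (L 0) (v0 + v1) + op_poly scale k (L 0) (G 0 (v0 + v1))"
    using vv by simp
  then have "v0 + (- v1) = (op_poly scale h (L 0) v0 + op_poly scale k (L 0) (G 0 v1)) +
                      (op_poly scale h (L 0) v1 + op_poly scale k (L 0) (G 0 v0))"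
    using hk by (simp add: op_poly_add_v[OF linL] lin_add[OF linG] algebra_simps)
  from dec_unique[OF this v0 P0 subspace_neg[OF sub1 v1] P1]
  have e0: "v0 = op_poly scale h (L 0) v0 + op_poly scale k (L 0) (G 0 v1)"
   and e1: "- v1 = op_poly scale h (L 0) v1 + op_poly scale k (L 0) (G 0 v0)" by auto
  have "v = op_poly scale h (L 0) (v0 - v1) - op_poly scale k (L 0) (G 0 (v0 - v1))"
  proof -
    have "v = v0 - (- v1)" using vv by simp
    also have "\<dots> = op_poly scale h (L 0) (v0 - v1) - op_poly scale k (L 0) (G 0 (v0 - v1))"
      apply (subst e0) apply (subst e1)
      by (simp add: lin_diff[OF linG] lin_diff[OF op_poly_lin[OF linL]] algebra_simps)
    finally show ?thesis .
  qed
  also have "\<dots> = Phi (h * h - k * ([:0, 1:] * k)) (h * k - k * h)"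
    unfolding hk Phi_G0 Phi_op Phi_diff ..
  also have "\<dots> = Phi (h * h - [:0, 1:] * (k * k)) 0"
    by (simp add: algebra_simps)
  finally have "Phi 1 0 = Phi (h * h - [:0, 1:] * (k * k)) 0" using Phi_1 by simp
  then have "h * h - [:0, 1:] * (k * k) = 1" using Phi_inj by metis
  then have hk2: "k = 0 \<and> (h = 1 \<or> h = -1)" by (rule sq_poly)
  have m1: "Phi (-1) 0 = - v"
  proof -
    have "Phi (-1) 0 = Phi (smult (-1) 1) (smult (-1) 0)" by (simp add: one_pCons)
    also have "\<dots> = scale (-1) (Phi 1 0)" by (simp only: Phi_smult)
    finally show ?thesis by (simp add: Phi_1)
  qed
  have "v0 - v1 = v \<or> v0 - v1 = - v"
    using hk hk2 Phi_1 m1 by auto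
  then show ?thesis
  proof
    assume "v0 - v1 = v"
    then have "v1 + v1 = 0" using vv by (simp add: algebra_simps)
    then have "v1 = 0" by (rule self_add_0)
    then show ?thesis using vv v0 by simp
  next
    assume "v0 - v1 = - v"
    then have "v0 = - v0" using vv by (simp add: algebra_simps)
    then have "v0 + v0 = 0" by (metis add.right_inverse)
    then have "v0 = 0" by (rule self_add_0)
    then show ?thesis using vv v1 by simp
  qed
qed

end



lemma vs_M: "vector_space M_scale"
  by unfold_locales (auto simp: M_scale_def smult_add_right smult_add_left)

lemma shift_0[simp]: "shift c 0 = 0" by (simp add: shift_def)
lemma shift_1[simp]: "shift c 1 = 1" by (simp add: shift_def pcompose_1)

locale Tv0 = Tv +
  assumes vV0: "v \<in> V0"
begin

lemma PhiV0: "Phi f 0 \<in> V0"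
  unfolding Phi_f0 using sub0 L_V0 vV0 by (rule op_V)

lemma PhiV1: "Phi 0 g \<in> V1"
  unfolding Phi_0g using sub1 L_V1 G_V0[OF vV0] by (rule op_V)

lemma V0_iff: "u \<in> V0 \<longleftrightarrow> (\<exists>f. u = Phi f 0)"
proof
  assume u: "u \<in> V0"
  obtain f g where ufg: "u = Phi f g" using Phi_surj by blast
  have "u + 0 = Phi f 0 + Phi 0 g" using ufg by (simp add: Phi_add)
  from dec_unique[OF this u PhiV0 subspace_0[OF sub1] PhiV1]
  have "Phi 0 g = Phi 0 0" by (simp add: Phi_00)
  then have "g = 0" using Phi_inj by blast
  then show "\<exists>f. u = Phi f 0" using ufg by blast
next
  assume "\<exists>f. u = Phi f 0"
  then show "u \<in> V0" using PhiV0 by blast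
qed

lemma V1_iff: "u \<in> V1 \<longleftrightarrow> (\<exists>g. u = Phi 0 g)"
proof
  assume u: "u \<in> V1"
  obtain f g where ufg: "u = Phi f g" using Phi_surj by blast
  have "0 + u = Phi f 0 + Phi 0 g" using ufg by (simp add: Phi_add)
  from dec_unique[OF this subspace_0[OF sub0] PhiV0 u PhiV1]
  have "Phi f 0 = Phi 0 0" by (simp add: Phi_00)
  then have "f = 0" using Phi_inj by blast
  then show "\<exists>g. u = Phi 0 g" using ufg by blast
next
  assume "\<exists>g. u = Phi 0 g"
  then show "u \<in> V1" using PhiV1 by blast
qed

definition Ac :: "int \<Rightarrow> complex poly" where "Ac b = (SOME A. G b v = Phi 0 A)"
definition Bc :: "int \<Rightarrow> complex poly" where "Bc b = (SOME B. G b (G 0 v) = Phi B 0)"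

lemma GvA: "G b v = Phi 0 (Ac b)"
proof -
  have "\<exists>A. G b v = Phi 0 A" using G_V0[OF vV0] V1_iff by blast
  then show ?thesis unfolding Ac_def by (rule someI_ex)
qed

lemma GvB: "G b (G 0 v) = Phi (Bc b) 0"
proof -
  have "\<exists>B. G b (G 0 v) = Phi B 0" using G_V1[OF G_V0[OF vV0]] V0_iff by blast
  then show ?thesis unfolding Bc_def by (rule someI_ex)
qed

lemma Gact: "G b (Phi f g) = Phi (Bc b * shift (of_int b / 2) g) (Ac b * shift (of_int b / 2) f)"
  by (rule Phi_Gb[OF GvA GvB])

lemma G0v: "G 0 v = Phi 0 1"
  using Phi_G0[of 1 0] Phi_1 by simp

lemma Ac0: "Ac 0 = 1"
proof -
  have "Phi 0 (Ac 0) = Phi 0 1" using GvA[of 0] G0v by simp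
  then show "Ac 0 = 1" using Phi_inj by blast
qed

lemma Bc0: "Bc 0 = [:0, 1:]"
proof -
  have "Phi (Bc 0) 0 = Phi [:0, 1:] 0" using GvB[of 0] G0v Phi_G0[of 0 1] by simp
  then show "Bc 0 = [:0, 1:]" using Phi_inj by blast
qed

lemma shift00[simp]: "shift 0 p = p" by (simp add: shift_def)

lemma rel: "polyrel Ac Bc"
proof
  fix a b
  have "G a (G b (Phi 1 0)) + G b (G a (Phi 1 0)) =
        scale (Kc a b) (G 0 (G (a + b) (Phi 1 0)) + G (a + b) (G 0 (Phi 1 0)))"
    by (rule GGK)
  then have "Phi (Bc a * shift (of_int a / 2) (Ac b) + Bc b * shift (of_int b / 2) (Ac a)) 0 =
             Phi (smult (Kc a b) ([:0, 1:] * Ac (a + b) + Bc (a + b))) 0"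
    by (simp add: Gact Ac0 Bc0 Phi_add Phi_smult)
  then show "Bc a * shift (of_int a / 2) (Ac b) + Bc b * shift (of_int b / 2) (Ac a) =
             smult (Kc a b) ([:0, 1:] * Ac (a + b) + Bc (a + b))"
    using Phi_inj by blast
next
  fix a b
  have "G a (G b (Phi 0 1)) + G b (G a (Phi 0 1)) =
        scale (Kc a b) (G 0 (G (a + b) (Phi 0 1)) + G (a + b) (G 0 (Phi 0 1)))"
    by (rule GGK)
  then have "Phi 0 (Ac a * shift (of_int a / 2) (Bc b) + Ac b * shift (of_int b / 2) (Bc a)) =
             Phi 0 (smult (Kc a b) (Bc (a + b) + [:of_int (a + b) / 2, 1:] * Ac (a + b)))"
    by (simp add: Gact Ac0 Bc0 Phi_add Phi_smult mult.commute)
  then show "Ac a * shift (of_int a / 2) (Bc b) + Ac b * shift (of_int b / 2) (Bc a) =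
             smult (Kc a b) (Bc (a + b) + [:of_int (a + b) / 2, 1:] * Ac (a + b))"
    using Phi_inj by blast
qed (rule Ac0, rule Bc0)

end



context Tv0
begin

lemma iso_main: "\<exists>lam \<alpha> t. lam \<noteq> 0 \<and> t \<in> {1, -1} \<and> iso_to_M scale V0 V1 L I G t lam \<alpha>"
proof -
  obtain u \<alpha> where u: "u \<noteq> 0" and AB: "\<And>b. Ac b = CA u b \<and> Bc b = CB u \<alpha> b"
    using polyrel.solve[OF rel] by blast
  define lam where "lam = u ^ 2"
  define c where "c = csqrt lam"
  define t where "t = u / c"
  have c2: "c ^ 2 = u ^ 2" unfolding c_def lam_def by simp
  have cu: "c = u \<or> c = - u"
  proof -
    have "(c - u) * (c + u) = 0" using c2 by (simp add: algebra_simps power2_eq_square)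
    then show ?thesis by (auto simp: add_eq_0_iff2)
  qed
  have cnz: "c \<noteq> 0" using cu u by auto
  have lnz: "lam \<noteq> 0" using u unfolding lam_def by simp
  have t1: "t \<in> {1, -1}" using cu u unfolding t_def by auto
  have tc: "t * c = u" unfolding t_def using cnz by simp
  have pw: "t powi b * c powi b = u powi b" for b
    using tc by (simp add: power_int_mult_distrib[symmetric])
  have pw': "(- t) powi b * c powi b = (- u) powi b" for b
    using tc by (simp add: power_int_mult_distrib[symmetric])
  have teven: "t powi (2 * m) = 1" for m
    using t1 by (auto simp: power_int_minus_left)
  have c2m: "c powi (2 * m) = u powi (2 * m)" for m
    using pw[of "2 * m"] teven[of m] by simp
  define phi where "phi = inv (\<lambda>(f, g). Phi f g)"
  have bijF: "bij (\<lambda>(f, g). Phi f g)"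
    using bijP unfolding Phi_def by (simp add: case_prod_beta)
  have phiP: "phi (Phi f g) = (f, g)" for f g
  proof -
    have "phi ((\<lambda>(f, g). Phi f g) (f, g)) = (f, g)"
      unfolding phi_def by (rule inv_f_f[OF bij_is_inj[OF bijF]])
    then show ?thesis by simp
  qed
  have bphi: "bij phi" unfolding phi_def by (rule bij_imp_bij_inv[OF bijF])
  have lin: "Vector_Spaces.linear scale M_scale phi"
    unfolding Vector_Spaces.linear_iff
  proof (intro conjI allI)
    show "vector_space scale" by (rule vector_space_axioms)
    show "vector_space M_scale" by (rule vs_M)
    fix x y
    obtain f g f' g' where x: "x = Phi f g" and y: "y = Phi f' g'" using Phi_surj by metis
    show "phi (x + y) = phi x + phi y" unfolding x y Phi_add phiP by simp
  next
    fix k x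
    obtain f g where x: "x = Phi f g" using Phi_surj by metis
    show "phi (scale k x) = M_scale k (phi x)" unfolding x Phi_smult phiP by (simp add: M_scale_def)
  qed
  have im0: "phi ` V0 = M_even"
  proof
    show "phi ` V0 \<subseteq> M_even" using V0_iff phiP by (auto simp: M_even_def)
    show "M_even \<subseteq> phi ` V0"
    proof
      fix x assume "x \<in> M_even"
      then obtain f where "x = (f, 0)" by (auto simp: M_even_def)
      then have "x = phi (Phi f 0)" by (simp add: phiP)
      then show "x \<in> phi ` V0" using PhiV0 by blast
    qed
  qed
  have im1: "phi ` V1 = M_odd"
  proof
    show "phi ` V1 \<subseteq> M_odd" using V1_iff phiP by (auto simp: M_odd_def)
    show "M_odd \<subseteq> phi ` V1"
    proof
      fix x assume "x \<in> M_odd"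
      then obtain g where "x = (0, g)" by (auto simp: M_odd_def)
      then have "x = phi (Phi 0 g)" by (simp add: phiP)
      then show "x \<in> phi ` V1" using PhiV1 by blast
    qed
  qed
  have GG: "G b (Phi f g) = Phi (smult ((-u) powi b) ([:of_int b * \<alpha>, 1:] * shift (of_int b / 2) g))
                                (smult (u powi b) (shift (of_int b / 2) f))" for b f g
    unfolding Gact using AB[of b] by (simp add: CA_def CB_def smult_add_right)
  have intG: "phi (G b w) = M_G t lam \<alpha> b (phi w)" for b w
  proof -
    obtain f g where w: "w = Phi f g" using Phi_surj by metis
    show ?thesis unfolding w GG phiP M_G_def c_def[symmetric] pw pw' by simp
  qed
  have intL: "phi (L m w) = M_L lam \<alpha> m (phi w)" for m w
  proof -
    obtain f g where w: "w = Phi f g" using Phi_surj by metis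
    have "L m w = scale (1/2) (G 0 (G (2 * m) w) + G (2 * m) (G 0 w))" by (rule Lform)
    also have "\<dots> = Phi (smult (1/2) ([:0, 1:] * smult (u powi (2 * m)) (shift (of_int (2 * m) / 2) f) +
                                     smult ((-u) powi (2 * m)) ([:of_int (2 * m) * \<alpha>, 1:] * shift (of_int (2 * m) / 2) f)))
                     (smult (1/2) (smult ((-u) powi (2 * m)) ([:of_int (2 * m) * \<alpha>, 1:] * shift (of_int (2 * m) / 2) g) +
                                     smult (u powi (2 * m)) (shift (of_int (2 * m) / 2) ([:0, 1:] * g))))"
      unfolding w GG Phi_G0 Phi_add Phi_smult by simp
    also have "\<dots> = Phi (smult (u powi (2 * m)) ([:of_int m * \<alpha>, 1:] * shift (of_int m) f))
                        (smult (u powi (2 * m)) ([:of_int m * (\<alpha> + 1/2), 1:] * shift (of_int m) g))"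
      by (intro arg_cong2[where f = Phi] poly_eq_poly_eq_iff[THEN iffD1] ext)
         (simp_all add: algebra_simps)
    finally show ?thesis by (simp add: w phiP M_L_def c_def[symmetric] c2m)
  qed
  have intI: "phi (I a w) = M_I t lam \<alpha> a (phi w)" if a: "odd a" for a w
  proof -
    obtain f g where w: "w = Phi f g" using Phi_surj by metis
    have an: "(of_int a :: complex) \<noteq> 0" using a by (metis even_zero of_int_eq_0_iff)
    have mu: "(-u) powi a = - (u powi a)" using a by (simp add: power_int_minus_left)
    have "I a w = scale (2 / of_int a) (G 0 (G a w) + G a (G 0 w))" by (rule Iform[OF a])
    also have "\<dots> = Phi (smult (2 / of_int a) ([:0, 1:] * smult (u powi a) (shift (of_int a / 2) f) +
                                     smult ((-u) powi a) ([:of_int a * \<alpha>, 1:] * shift (of_int a / 2) f)))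
                     (smult (2 / of_int a) (smult ((-u) powi a) ([:of_int a * \<alpha>, 1:] * shift (of_int a / 2) g) +
                                     smult (u powi a) (shift (of_int a / 2) ([:0, 1:] * g))))"
      unfolding w GG Phi_G0 Phi_add Phi_smult by simp
    also have "\<dots> = Phi (smult (- 2 * u powi a * \<alpha>) (shift (of_int a / 2) f))
                        (smult (u powi a * (1 - 2 * \<alpha>)) (shift (of_int a / 2) g))"
      unfolding mu using an
      by (intro arg_cong2[where f = Phi] poly_eq_poly_eq_iff[THEN iffD1] ext)
         (simp_all add: field_simps)
    finally show ?thesis
      by (simp add: w phiP M_I_def c_def[symmetric] pw[symmetric] mult.assoc mult.left_commute)
  qed
  have "iso_to_M scale V0 V1 L I G t lam \<alpha>"
    unfolding iso_to_M_def using lin bphi im0 im1 intL intI intG by blast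
  then show ?thesis using lnz t1 by blast
qed

end



lemma T_swap:
  assumes T: "is_T_module scale V0 V1 L I G"
  shows "is_T_module scale V1 V0 L I G"
proof -
  have d: "\<forall>v. \<exists>v0\<in>V0. \<exists>v1\<in>V1. v = v0 + v1"
    using T unfolding is_T_module_def by (elim conjE) assumption
  have d': "\<forall>v. \<exists>v0\<in>V1. \<exists>v1\<in>V0. v = v0 + v1"
  proof
    fix v
    obtain v0 v1 where "v0 \<in> V0" "v1 \<in> V1" "v = v0 + v1" using d by blast
    then show "\<exists>v0\<in>V1. \<exists>v1\<in>V0. v = v0 + v1" by (metis add.commute)
  qed
  have i: "V1 \<inter> V0 = {0}"
    using T unfolding is_T_module_def by (elim conjE) (simp add: Int_commute)
  have hL: "\<forall>m. L m ` V1 \<subseteq> V1 \<and> L m ` V0 \<subseteq> V0"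
  proof -
    have "\<forall>m. L m ` V0 \<subseteq> V0 \<and> L m ` V1 \<subseteq> V1"
      using T unfolding is_T_module_def by (elim conjE) assumption
    then show ?thesis by blast
  qed
  have hI: "\<forall>a. odd a \<longrightarrow> I a ` V1 \<subseteq> V1 \<and> I a ` V0 \<subseteq> V0"
  proof -
    have "\<forall>a. odd a \<longrightarrow> I a ` V0 \<subseteq> V0 \<and> I a ` V1 \<subseteq> V1"
      using T unfolding is_T_module_def by (elim conjE) assumption
    then show ?thesis by blast
  qed
  have hG: "\<forall>b. G b ` V1 \<subseteq> V0 \<and> G b ` V0 \<subseteq> V1"
  proof -
    have "\<forall>b. G b ` V0 \<subseteq> V1 \<and> G b ` V1 \<subseteq> V0"
      using T unfolding is_T_module_def by (elim conjE) assumption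
    then show ?thesis by blast
  qed
  show ?thesis
    using T d' i hL hI hG unfolding is_T_module_def
    by (elim conjE) (intro conjI; assumption)
qed

theorem theorem3p3:
  fixes scale :: "complex \<Rightarrow> 'v::ab_group_add \<Rightarrow> 'v"
    and V0 V1 :: "'v set"
    and L I G :: "int \<Rightarrow> 'v \<Rightarrow> 'v"
  assumes "is_T_module scale V0 V1 L I G"
    and "Uh_free_rank1 scale L G"
  shows "\<exists>lam \<alpha> t. lam \<noteq> 0 \<and> t \<in> {1, -1} \<and>
           (iso_to_M scale V0 V1 L I G t lam \<alpha> \<or> iso_to_M scale V1 V0 L I G t lam \<alpha>)"
proof -
  have vs: "vector_space scale"
    using assms(1) unfolding is_T_module_def by (elim conjE) assumption
  obtain v where bv: "bij (\<lambda>(a, b). op_poly scale a (L 0) v + op_poly scale b (L 0) (G 0 v))"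
    using assms(2) unfolding Uh_free_rank1_def by blast
  have cv: "cvs scale" unfolding cvs_def by (rule vs)
  have Tv: "Tv scale V0 V1 L I G v"
    by (rule Tv.intro[OF Tm.intro[OF cv Tm_axioms.intro[OF assms(1)]] Tv_axioms.intro[of scale L v G, OF bv]])
  have Tv': "Tv scale V1 V0 L I G v"
    by (rule Tv.intro[OF Tm.intro[OF cv Tm_axioms.intro[OF T_swap[OF assms(1)]]] Tv_axioms.intro[of scale L v G, OF bv]])
  have "v \<in> V0 \<or> v \<in> V1" by (rule Tv.v_hom[OF Tv])
  then show ?thesis
  proof
    assume "v \<in> V0"
    then have "Tv0 scale V0 V1 L I G v" by (rule Tv0.intro[OF Tv Tv0_axioms.intro])
    then show ?thesis using Tv0.iso_main by blast
  next
    assume "v \<in> V1"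
    then have "Tv0 scale V1 V0 L I G v" by (rule Tv0.intro[OF Tv' Tv0_axioms.intro])
    then show ?thesis using Tv0.iso_main by blast
  qed
qed


end
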